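(* Consider the sensor-network Kalman filtering model of the context with a single sensor ($M=1$, so $S_1$ transmits directly to the gateway $S_0$ and $C(k)=\gamma_1(k)C_1$) and a time-invariant system matrix $A(k)=A$ for all $k$. Suppose the network state process $\{\Xi(k)\}$ is a time-homogeneous Markov chain with transition probabilities $p_{ij}$, $i,j\in\mathbb{B}$, the power and bit-rate control laws are of the form $u_1(k)=\kappa_1(\Xi(k),h_1(k))$, $b_1(k)=\eta_1(\Xi(k),h_1(k))$, and $C_1$ has full column rank. If there exists $\rho\in[0,1)$ such that $$\|A\|^2\sum_{j\in\mathbb{B}}p_{ij}(1-\phi_{1|j})\le\rho\quad\text{for all }i\in\mathbb{B},$$ then the Kalman filter is exponentially bounded.
   Context: System: $x(k+1)=Ax(k)+w(k)$, $k\in\mathbb{N}_0$, $x(k)\in\mathbb{R}^n$, $x(0)\sim\mathcal N(x_0,P_0)$, $\{w(k)\}$ independent with $w(k)\sim\mathcal N(0,Q(k))$; one sensor $y_1(k)=C_1x(k)+v_1(k)$, $C_1\in\mathbb{R}^{l_1\times n}$, $\{v_1(k)\}$ independent with $v_1(k)\sim\mathcal N(0,R_1(k))$; $x(0),w,v_1$ mutually independent; $\{Q(k)\},\{R_1(k)\}$ deterministic, bounded, known. $\|\cdot\|$ is the spectral norm. Fading model: network state $\Xi(k)\in\mathbb{B}=\{1,\dots,|\mathbb{B}|\}$ (finite); channel power gain $h_1(k)\ge0$ with time-homogeneous conditional distribution given the network state, gains at different times conditionally independent given the network states. The link success indicator $\gamma_1(k)\in\{0,1\}$ ($1$ iff the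 packet from $S_1$ reaches the gateway at time $k$) satisfies $\Pr\{\gamma_1(k)=1\mid h_1(k)=h,u_1(k)=u,b_1(k)=b\}=f_1(hu,b)$ with $u_1$ the transmit power, $b_1$ the bit-rate, $f_1$ increasing in the first and decreasing in the second argument. Conditioned on the network states the $\gamma_1(k)$ are independent over time, and $\phi_{1|j}=\Pr\{\gamma_1(k)=1\mid\Xi(k)=j\}$ does not depend on $k$; the network and dropout processes are independent of $x(0),w,v_1$. Kalman filter: $P(k+1|k)=AP(k|k-1)A^T+Q(k)-K(k)C_1P(k|k-1)A^T$, $K(k)=\gamma_1(k)AP(k|k-1)C_1^T(C_1P(k|k-1)C_1^T+R_1(k))^{-1}$, $P(0|-1)=P_0$ (with the corresponding state-estimate recursion). The filter is exponentially bounded if there exist finite $\alpha,\beta$ and $\rho'\in[0,1)$ with $\mathbf{E}\{\operatorname{tr}P(k|k-1)\}\le\alpha\rho'^k+\beta$ for all $k\in\mathbb{N}_0$. *)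

theory Defs
  imports "HOL-Analysis.Analysis" "HOL-Probability.Probability"
begin

definition spec_norm :: "real^'n^'m \<Rightarrow> real" where
  "spec_norm A = onorm (\<lambda>x. A *v x)"

definition sym_psd :: "real^'n^'n \<Rightarrow> bool" where
  "sym_psd M \<longleftrightarrow> transpose M = M \<and> (\<forall>x. 0 \<le> x \<bullet> (M *v x))"

definition sym_pd :: "real^'n^'n \<Rightarrow> bool" where
  "sym_pd M \<longleftrightarrow> transpose M = M \<and> (\<forall>x. x \<noteq> 0 \<longrightarrow> 0 < x \<bullet> (M *v x))"

text \<open>Riccati recursion of the Kalman filter for P(k|k-1), driven by a realisation g of the
  link success indicators gamma_1(k) (True = packet received).\<close>
fun Ppred :: "real^'n^'n \<Rightarrow> real^'n^'l \<Rightarrow> (nat \<Rightarrow> real^'n^'n) \<Rightarrow> (nat \<Rightarrow> real^'l^'l)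
              \<Rightarrow> real^'n^'n \<Rightarrow> (nat \<Rightarrow> bool) \<Rightarrow> nat \<Rightarrow> real^'n^'n" where
  "Ppred A C Q R P0 g 0 = P0"
| "Ppred A C Q R P0 g (Suc k) =
     (let P = Ppred A C Q R P0 g k;
          K = (if g k then A ** P ** transpose C ** matrix_inv (C ** P ** transpose C + R k)
               else 0)
      in A ** P ** transpose A + Q k - K ** C ** P ** transpose A)"

end

theory Submission
  imports Defs
begin

lemma tswap: "(transpose B *v x) \<bullet> y = x \<bullet> ((B::real^'n^'m) *v y)"
  by (simp add: dot_lmul_matrix)

lemma tswap': "y \<bullet> (transpose B *v x) = (B *v y) \<bullet> (x::real^'m)" for B :: "real^'n^'m"
  by (metis inner_commute tswap)

lemma norm_mv: "norm ((B::real^'n^'m) *v x) \<le> spec_norm B * norm x"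
  unfolding spec_norm_def by (rule onorm[OF matrix_vector_mul_bounded_linear])

lemma spec_norm_nonneg: "0 \<le> spec_norm (B::real^'n^'m)"
  unfolding spec_norm_def by (rule onorm_pos_le[OF matrix_vector_mul_bounded_linear])

lemma norm_tmv: "norm (transpose (B::real^'n^'m) *v x) \<le> spec_norm B * norm x"
proof -
  let ?v = "transpose B *v x"
  have "norm ?v ^ 2 = ?v \<bullet> ?v" by (simp add: power2_norm_eq_inner)
  also have "\<dots> = x \<bullet> (B *v ?v)" by (rule tswap)
  also have "\<dots> \<le> norm x * norm (B *v ?v)" by (rule norm_cauchy_schwarz)
  also have "\<dots> \<le> norm x * (spec_norm B * norm ?v)"
    by (intro mult_left_mono norm_mv) simp
  finally have h: "norm ?v * norm ?v \<le> (spec_norm B * norm x) * norm ?v"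
    by (simp add: power2_eq_square algebra_simps)
  show ?thesis
  proof (cases "norm ?v = 0")
    case True then show ?thesis using spec_norm_nonneg[of B] by simp
  next
    case False then show ?thesis using h by (simp add: mult_le_cancel_right)
  qed
qed

lemma quad_bound_norm: "x \<bullet> ((P::real^'n^'n) *v x) \<le> spec_norm P * norm x ^ 2"
proof -
  have "x \<bullet> (P *v x) \<le> norm x * norm (P *v x)" by (rule norm_cauchy_schwarz)
  also have "\<dots> \<le> norm x * (spec_norm P * norm x)" by (intro mult_left_mono norm_mv) simp
  finally show ?thesis by (simp add: power2_eq_square algebra_simps)
qed

lemma quad_conj: "x \<bullet> (((B::real^'n^'m) ** P ** transpose B) *v x)
   = (transpose B *v x) \<bullet> (P *v (transpose B *v x))"
  by (simp only: matrix_vector_mul_assoc[symmetric] tswap[symmetric])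

lemma transpose_add': "transpose (X + Y) = transpose X + transpose (Y::real^'n^'m)"
  by (simp add: transpose_def vec_eq_iff)
lemma transpose_diff': "transpose (X - Y) = transpose X - transpose (Y::real^'n^'m)"
  by (simp add: transpose_def vec_eq_iff)

lemma trace_quad: "trace (P::real^'n^'n) = (\<Sum>i\<in>UNIV. axis i 1 \<bullet> (P *v axis i 1))"
  unfolding trace_def
  by (intro sum.cong refl) (simp add: inner_axis' matrix_vector_mult_basis column_def)

lemma trace_le: assumes "\<And>x. x \<bullet> ((P::real^'n^'n) *v x) \<le> c * norm x ^ 2"
  shows "trace P \<le> real CARD('n) * c"
proof -
  have "trace P \<le> (\<Sum>i\<in>(UNIV::'n set). c)"
    unfolding trace_quad by (intro sum_mono) (use assms[of "axis _ 1"] in simp)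
  then show ?thesis by simp
qed

lemma psd_quad: "sym_psd P \<Longrightarrow> 0 \<le> x \<bullet> (P *v x)" by (simp add: sym_psd_def)

lemma sym_swap: assumes "transpose P = P" shows "y \<bullet> ((P::real^'n^'n) *v x) = (P *v y) \<bullet> x"
  using tswap'[of y P x] assms by simp

locale ric =
  fixes C :: "real^'n^'l" and P :: "real^'n^'n" and R :: "real^'l^'l"
  assumes P: "sym_psd P" and R: "sym_pd R"
begin

definition S where "S = C ** P ** transpose C + R"
definition Si where "Si = matrix_inv S"

lemma S_quad: "v \<bullet> (S *v v) = (transpose C *v v) \<bullet> (P *v (transpose C *v v)) + v \<bullet> (R *v v)"
  unfolding S_def by (simp only: matrix_vector_mult_add_rdistrib inner_add_right quad_conj)

lemma S_pos: "v \<noteq> 0 \<Longrightarrow> 0 < v \<bullet> (S *v v)"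
  using S_quad[of v] psd_quad[OF P, of "transpose C *v v"] R unfolding sym_pd_def by force

lemma S_psd: "0 \<le> v \<bullet> (S *v v)"
  using S_pos[of v] by (cases "v = 0") auto

lemma S_sym: "transpose S = S"
  using P R unfolding S_def sym_psd_def sym_pd_def
  by (simp add: transpose_add' matrix_transpose_mul matrix_mul_assoc)

lemma S_inv: "invertible S"
proof -
  have "inj ((*v) S)"
  proof (rule injI)
    fix x y assume "S *v x = S *v y"
    then have "S *v (x - y) = 0" by (simp add: matrix_vector_mult_diff_distrib)
    then show "x = y" using S_pos[of "x - y"] by (cases "x - y = 0") auto
  qed
  then show ?thesis using matrix_left_invertible_injective invertible_left_inverse by blast
qed

lemma Si: "S ** Si = mat 1" "Si ** S = mat 1"
  using someI_ex[OF S_inv[unfolded invertible_def]] unfolding Si_def matrix_inv_def by auto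

lemma Si_sym: "transpose Si = Si"
proof -
  have "transpose (Si ** S) = mat 1" using Si by simp
  then have "S ** transpose Si = mat 1" by (simp add: matrix_transpose_mul S_sym)
  then have "Si ** (S ** transpose Si) = Si" by simp
  then show ?thesis by (simp add: matrix_mul_assoc Si)
qed

lemma S_Si: "S *v (Si *v z) = z"
  by (simp add: matrix_vector_mul_assoc Si)

lemma key_id:
  fixes y :: "real^'n" and u :: "real^'l"
  defines "z \<equiv> C *v (P *v y)"
  shows "y \<bullet> (P *v y) - z \<bullet> (Si *v z)
    = (y - transpose C *v u) \<bullet> (P *v (y - transpose C *v u)) + u \<bullet> (R *v u)
      - (u - Si *v z) \<bullet> (S *v (u - Si *v z))"
proof -
  have Ps: "transpose P = P" using P by (simp add: sym_psd_def)
  define c where "c = transpose C *v u"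
  define w where "w = Si *v z"
  have e1: "y \<bullet> (P *v c) = c \<bullet> (P *v y)" using sym_swap[OF Ps] by (simp add: inner_commute)
  have e2: "c \<bullet> (P *v y) = u \<bullet> z" unfolding c_def z_def by (rule tswap)
  have e3: "c \<bullet> (P *v c) = u \<bullet> ((C ** P ** transpose C) *v u)" unfolding c_def by (rule quad_conj[symmetric])
  have e4: "u \<bullet> (S *v u) = u \<bullet> ((C ** P ** transpose C) *v u) + u \<bullet> (R *v u)"
    unfolding S_def by (simp add: matrix_vector_mult_add_rdistrib inner_add_right)
  have e5: "u \<bullet> (S *v w) = u \<bullet> z" unfolding w_def by (simp add: S_Si)
  have e6: "w \<bullet> (S *v u) = (S *v w) \<bullet> u" using sym_swap[OF S_sym] by simp
  have e7: "w \<bullet> (S *v w) = z \<bullet> w" unfolding w_def by (simp add: S_Si inner_commute)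
  have "(y - c) \<bullet> (P *v (y - c)) = y \<bullet> (P *v y) - y \<bullet> (P *v c) - c \<bullet> (P *v y) + c \<bullet> (P *v c)"
    by (simp add: matrix_vector_mult_diff_distrib inner_diff_left inner_diff_right)
  moreover have "(u - w) \<bullet> (S *v (u - w)) = u \<bullet> (S *v u) - u \<bullet> (S *v w) - w \<bullet> (S *v u) + w \<bullet> (S *v w)"
    by (simp add: matrix_vector_mult_diff_distrib inner_diff_left inner_diff_right)
  ultimately show ?thesis
    using e1 e2 e3 e4 e5 e6 e7 unfolding c_def[symmetric] w_def[symmetric]
    by (simp add: S_Si inner_commute)
qed

definition psi where "psi y = y \<bullet> (P *v y) - (C *v (P *v y)) \<bullet> (Si *v (C *v (P *v y)))"

lemma psi_nonneg: "0 \<le> psi y"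
proof -
  define z where "z = C *v (P *v y)"
  have "psi y = (y - transpose C *v (Si *v z)) \<bullet> (P *v (y - transpose C *v (Si *v z)))
      + (Si *v z) \<bullet> (R *v (Si *v z))"
    using key_id[of y "Si *v z"] unfolding psi_def z_def by simp
  moreover have "0 \<le> (Si *v z) \<bullet> (R *v (Si *v z))"
    using R unfolding sym_pd_def by (cases "Si *v z = 0") (auto intro: less_imp_le)
  ultimately show ?thesis using psd_quad[OF P] by (metis add_nonneg_nonneg)
qed

lemma psi_le: assumes L: "L ** C = mat 1"
  shows "psi y \<le> spec_norm R * (spec_norm L)^2 * norm y ^ 2"
proof -
  define u where "u = transpose L *v y"
  have cu: "transpose C *v u = y"
    unfolding u_def by (simp only: matrix_vector_mul_assoc matrix_transpose_mul[symmetric] L) simp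
  have "psi y = u \<bullet> (R *v u) - (u - Si *v (C *v (P *v y))) \<bullet> (S *v (u - Si *v (C *v (P *v y))))"
    using key_id[of y u] unfolding psi_def cu by simp
  also have "\<dots> \<le> u \<bullet> (R *v u)" using S_psd by simp
  also have "\<dots> \<le> spec_norm R * norm u ^ 2" by (rule quad_bound_norm)
  also have "\<dots> \<le> spec_norm R * (spec_norm L * norm y) ^ 2"
    unfolding u_def
    by (intro mult_left_mono power_mono norm_tmv spec_norm_nonneg) simp
  finally show ?thesis by (simp add: power_mult_distrib)
qed

lemma step_quad:
  fixes A :: "real^'n^'n" and Q :: "real^'n^'n"
  shows "x \<bullet> ((A ** P ** transpose A + Q - (A ** P ** transpose C ** Si) ** C ** P ** transpose A) *v x)
    = psi (transpose A *v x) + x \<bullet> (Q *v x)"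
proof -
  have Ps: "transpose P = P" using P by (simp add: sym_psd_def)
  have m: "(A ** P ** transpose C ** Si) ** C ** P ** transpose A
     = A ** (P ** transpose C ** Si ** C ** P) ** transpose A" by (simp add: matrix_mul_assoc)
  have n: "y \<bullet> ((P ** transpose C ** Si ** C ** P) *v y) = (C *v (P *v y)) \<bullet> (Si *v (C *v (P *v y)))" for y
  proof -
    have "y \<bullet> ((P ** transpose C ** Si ** C ** P) *v y) = y \<bullet> (P *v (transpose C *v (Si *v (C *v (P *v y)))))"
      by (simp only: matrix_vector_mul_assoc matrix_mul_assoc)
    also have "\<dots> = (P *v y) \<bullet> (transpose C *v (Si *v (C *v (P *v y))))"
      using sym_swap[OF Ps] by simp
    also have "\<dots> = (C *v (P *v y)) \<bullet> (Si *v (C *v (P *v y)))" by (rule tswap')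
    finally show ?thesis .
  qed
  show ?thesis unfolding m
    by (simp only: matrix_vector_mult_diff_rdistrib matrix_vector_mult_add_rdistrib inner_diff_right
        inner_add_right quad_conj n psi_def)
qed

lemma step_sym:
  fixes A :: "real^'n^'n" and Q :: "real^'n^'n"
  assumes "transpose Q = Q"
  shows "transpose (A ** P ** transpose A + Q - (A ** P ** transpose C ** Si) ** C ** P ** transpose A)
    = A ** P ** transpose A + Q - (A ** P ** transpose C ** Si) ** C ** P ** transpose A"
proof -
  have Ps: "transpose P = P" using P by (simp add: sym_psd_def)
  show ?thesis using assms
    by (simp add: transpose_add' transpose_diff' matrix_transpose_mul matrix_mul_assoc Ps Si_sym)
qed

end

locale sp =
  fixes A :: "real^'n^'n" and C1 :: "real^'n^'l"
    and Q :: "nat \<Rightarrow> real^'n^'n" and R1 :: "nat \<Rightarrow> real^'l^'l" and P0 :: "real^'n^'n"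
    and L :: "real^'l^'n" and qc rc :: real
  assumes P0: "sym_psd P0" and Qc: "\<And>k. sym_psd (Q k)" and Rc: "\<And>k. sym_pd (R1 k)"
    and L: "L ** C1 = mat 1"
    and qc: "\<And>k. spec_norm (Q k) \<le> qc" and rc: "\<And>k. spec_norm (R1 k) \<le> rc"
begin

definition "a = (spec_norm A)^2"
definition "D = rc * (spec_norm L)^2 * a + qc"

fun bnd :: "(nat \<Rightarrow> bool) \<Rightarrow> nat \<Rightarrow> real" where
  "bnd g 0 = spec_norm P0"
| "bnd g (Suc k) = (if g k then D else a * bnd g k + qc)"

lemma qc_nn: "0 \<le> qc" using qc[of 0] spec_norm_nonneg[of "Q 0"] by linarith
lemma rc_nn: "0 \<le> rc" using rc[of 0] spec_norm_nonneg[of "R1 0"] by linarith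
lemma a_nn: "0 \<le> a" unfolding a_def by simp
lemma D_ge: "qc \<le> D" unfolding D_def using rc_nn a_nn by simp

lemma bnd_nn: "0 \<le> bnd g k"
  by (induction k) (auto simp: spec_norm_nonneg D_def qc_nn rc_nn a_nn)

lemma Qquad: "x \<bullet> (Q k *v x) \<le> qc * norm x ^ 2"
  using quad_bound_norm[of x "Q k"] qc[of k] by (meson mult_right_mono order_trans zero_le_power2)

lemma nA: "norm (transpose A *v x) ^ 2 \<le> a * norm x ^ 2"
  unfolding a_def using norm_tmv[of A x]
  by (metis norm_ge_zero power_mono power_mult_distrib)

lemma inv: "sym_psd (Ppred A C1 Q R1 P0 g k) \<and> (\<forall>x. x \<bullet> (Ppred A C1 Q R1 P0 g k *v x) \<le> bnd g k * norm x ^ 2)"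
proof (induction k)
  case 0
  then show ?case by (simp add: P0 quad_bound_norm)
next
  case (Suc k)
  define P where "P = Ppred A C1 Q R1 P0 g k"
  have Pp: "sym_psd P" and Pb: "\<And>x. x \<bullet> (P *v x) \<le> bnd g k * norm x ^ 2" using Suc P_def by auto
  interpret ric C1 P "R1 k" using Pp Rc by unfold_locales auto
  have Qs: "transpose (Q k) = Q k" using Qc by (simp add: sym_psd_def)
  show ?case
  proof (cases "g k")
    case True
    have E: "Ppred A C1 Q R1 P0 g (Suc k) = A ** P ** transpose A + Q k - (A ** P ** transpose C1 ** Si) ** C1 ** P ** transpose A"
      using True by (simp add: P_def[symmetric] Si_def S_def Let_def)
    have q: "x \<bullet> (Ppred A C1 Q R1 P0 g (Suc k) *v x) = psi (transpose A *v x) + x \<bullet> (Q k *v x)" for x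
      unfolding E by (rule step_quad)
    show ?thesis
    proof
      show "sym_psd (Ppred A C1 Q R1 P0 g (Suc k))"
        unfolding sym_psd_def using q psi_nonneg psd_quad[OF Qc] step_sym[OF Qs] E
        by (metis add_nonneg_nonneg)
      show "\<forall>x. x \<bullet> (Ppred A C1 Q R1 P0 g (Suc k) *v x) \<le> bnd g (Suc k) * norm x ^ 2"
      proof
        fix x
        have "psi (transpose A *v x) \<le> spec_norm (R1 k) * (spec_norm L)^2 * norm (transpose A *v x) ^ 2"
          by (rule psi_le[OF L])
        also have "\<dots> \<le> rc * (spec_norm L)^2 * (a * norm x ^ 2)"
          by (intro mult_mono nA rc) (auto simp: rc_nn spec_norm_nonneg)
        finally show "x \<bullet> (Ppred A C1 Q R1 P0 g (Suc k) *v x) \<le> bnd g (Suc k) * norm x ^ 2"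
          using q[of x] Qquad[of x k] True by (simp add: D_def algebra_simps)
      qed
    qed
  next
    case False
    have E: "Ppred A C1 Q R1 P0 g (Suc k) = A ** P ** transpose A + Q k"
      using False by (simp add: P_def Let_def)
    have q: "x \<bullet> (Ppred A C1 Q R1 P0 g (Suc k) *v x) = (transpose A *v x) \<bullet> (P *v (transpose A *v x)) + x \<bullet> (Q k *v x)" for x
      unfolding E by (simp only: matrix_vector_mult_add_rdistrib inner_add_right quad_conj)
    have Ps: "transpose P = P" using Pp by (simp add: sym_psd_def)
    show ?thesis
    proof
      show "sym_psd (Ppred A C1 Q R1 P0 g (Suc k))"
        unfolding sym_psd_def using q psd_quad[OF Pp] psd_quad[OF Qc] E Qs Ps
        by (simp add: transpose_add' matrix_transpose_mul matrix_mul_assoc)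
      show "\<forall>x. x \<bullet> (Ppred A C1 Q R1 P0 g (Suc k) *v x) \<le> bnd g (Suc k) * norm x ^ 2"
      proof
        fix x
        have "(transpose A *v x) \<bullet> (P *v (transpose A *v x)) \<le> bnd g k * (a * norm x ^ 2)"
          using Pb[of "transpose A *v x"] nA[of x] bnd_nn[of g k]
          by (meson mult_left_mono order_trans)
        then show "x \<bullet> (Ppred A C1 Q R1 P0 g (Suc k) *v x) \<le> bnd g (Suc k) * norm x ^ 2"
          using q[of x] Qquad[of x k] False by (simp add: algebra_simps)
      qed
    qed
  qed
qed

definition fl :: "(nat \<Rightarrow> bool) \<Rightarrow> nat \<Rightarrow> nat \<Rightarrow> bool" where
  "fl g i j = (\<forall>t. i \<le> t \<and> t < j \<longrightarrow> \<not> g t)"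

lemma unroll: "bnd g k \<le> D * (\<Sum>m<k. a^m * of_bool (fl g (k-m) k)) + a^k * spec_norm P0 * of_bool (fl g 0 k)"
proof (induction k)
  case 0 then show ?case by (simp add: fl_def)
next
  case (Suc k)
  have step: "bnd g (Suc k) \<le> D + of_bool (\<not> g k) * a * bnd g k"
    using D_ge by auto
  have f1: "fl g (k - m) (Suc k) = (fl g (k - m) k \<and> \<not> g k)" if "m < k" for m
    using that unfolding fl_def by (auto simp: less_Suc_eq)
  have f2: "fl g 0 (Suc k) = (fl g 0 k \<and> \<not> g k)" unfolding fl_def by (auto simp: less_Suc_eq)
  have "of_bool (\<not> g k) * a * bnd g k \<le> of_bool (\<not> g k) * a *
       (D * (\<Sum>m<k. a^m * of_bool (fl g (k-m) k)) + a^k * spec_norm P0 * of_bool (fl g 0 k))"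
    using Suc a_nn by (intro mult_left_mono) auto
  also have "\<dots> = D * (\<Sum>m<k. a^Suc m * of_bool (fl g (Suc k - Suc m) (Suc k)))
      + a^Suc k * spec_norm P0 * of_bool (fl g 0 (Suc k))"
  proof (cases "g k")
    case True
    have "(\<Sum>m<k. a^Suc m * of_bool (fl g (Suc k - Suc m) (Suc k))) = 0"
      by (intro sum.neutral ballI) (use True f1 in auto)
    then show ?thesis using True f2 by simp
  next
    case False
    have "(\<Sum>m<k. a^Suc m * of_bool (fl g (Suc k - Suc m) (Suc k)))
       = a * (\<Sum>m<k. a^m * of_bool (fl g (k - m) k))"
      unfolding sum_distrib_left by (intro sum.cong refl) (use False f1 in auto)
    then show ?thesis using False f2 by (simp add: algebra_simps)
  qed
  finally have "bnd g (Suc k) \<le> D + D * (\<Sum>m<k. a^Suc m * of_bool (fl g (Suc k - Suc m) (Suc k)))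
      + a^Suc k * spec_norm P0 * of_bool (fl g 0 (Suc k))" using step by linarith
  also have "D + D * (\<Sum>m<k. a^Suc m * of_bool (fl g (Suc k - Suc m) (Suc k))) =
      D * (\<Sum>m<Suc k. a^m * of_bool (fl g (Suc k - m) (Suc k)))"
  proof -
    have "fl g (Suc k) (Suc k)" by (auto simp: fl_def)
    then show ?thesis by (subst sum.lessThan_Suc_shift) (simp add: algebra_simps)
  qed
  finally show ?case .
qed

lemma trace_bound: "trace (Ppred A C1 Q R1 P0 g k) \<le> real CARD('n) *
   (D * (\<Sum>m<k. a^m * of_bool (fl g (k-m) k)) + a^k * spec_norm P0 * of_bool (fl g 0 k))"
proof -
  have "trace (Ppred A C1 Q R1 P0 g k) \<le> real CARD('n) * bnd g k"
    using inv by (intro trace_le) blast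
  also have "\<dots> \<le> real CARD('n) *
   (D * (\<Sum>m<k. a^m * of_bool (fl g (k-m) k)) + a^k * spec_norm P0 * of_bool (fl g 0 k))"
    by (intro mult_left_mono unroll) simp
  finally show ?thesis .
qed

end

lemma sum_PiE_insert:
  fixes F :: "('a \<Rightarrow> 'c::finite) \<Rightarrow> real"
  assumes "finite S" "x \<notin> S"
  shows "(\<Sum>h\<in>PiE (insert x S) (\<lambda>_. UNIV). F h) = (\<Sum>h\<in>PiE S (\<lambda>_. UNIV). \<Sum>y\<in>UNIV. F (h(x := y)))"
proof -
  have "(\<Sum>h\<in>PiE (insert x S) (\<lambda>_. UNIV). F h) = sum (F \<circ> (\<lambda>(y, g). g(x := y))) ((UNIV::'c set) \<times> PiE S (\<lambda>_. UNIV))"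
    unfolding PiE_insert_eq by (rule sum.reindex[OF inj_combinator[OF assms(2)]])
  also have "\<dots> = (\<Sum>y\<in>UNIV. \<Sum>h\<in>PiE S (\<lambda>_. UNIV). F (h(x := y)))"
    by (simp add: sum.cartesian_product comp_def case_prod_unfold)
  also have "\<dots> = (\<Sum>h\<in>PiE S (\<lambda>_. UNIV). \<Sum>y\<in>UNIV. F (h(x := y)))"
    by (rule sum.swap)
  finally show ?thesis .
qed

lemma sum_delta_ob: "(\<Sum>x\<in>(UNIV::'a::finite set). of_bool (x = j) * g x) = (g j :: real)"
proof -
  have "(\<lambda>x. of_bool (x = j) * g x) = (\<lambda>x. if x = j then g x else 0)" by auto
  then show ?thesis by simp
qed

lemma sum_delta_ob2: "(\<Sum>x\<in>(UNIV::'a::finite set). \<Sum>b\<in>B. of_bool (x = j) * f x b) = (\<Sum>b\<in>B. f j b :: real)"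
proof -
  have "(\<Sum>x\<in>(UNIV::'a::finite set). \<Sum>b\<in>B. of_bool (x = j) * f x b) = (\<Sum>x\<in>(UNIV::'a::finite set). of_bool (x = j) * (\<Sum>b\<in>B. f x b))"
    by (simp add: sum_distrib_left)
  then show ?thesis using sum_delta_ob by simp
qed

locale chain =
  fixes pi :: "'b::finite \<Rightarrow> real" and p :: "'b \<Rightarrow> 'b \<Rightarrow> real"
begin

definition Wc :: "(nat \<Rightarrow> 'b \<Rightarrow> bool \<Rightarrow> real) \<Rightarrow> nat \<Rightarrow> (nat \<Rightarrow> 'b \<times> bool) \<Rightarrow> real" where
  "Wc c n h = pi (fst (h 0)) * (\<Prod>t<n. p (fst (h t)) (fst (h (Suc t)))) * (\<Prod>t\<le>n. c t (fst (h t)) (snd (h t)))"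

definition V where
  "V c n j = (\<Sum>h\<in>PiE {..n} (\<lambda>_. UNIV). of_bool (fst (h n) = j) * Wc c n h)"

lemma sum_pair: "(\<Sum>y\<in>(UNIV :: ('b \<times> bool) set). f y) = (\<Sum>j\<in>UNIV. \<Sum>b\<in>UNIV. f (j, b))"
  by (simp add: sum.cartesian_product flip: UNIV_Times_UNIV)

lemma V0: "V c 0 j = pi j * (\<Sum>b\<in>UNIV. c 0 j b)"
proof -
  have "V c 0 j = (\<Sum>y\<in>UNIV. of_bool (fst y = j) * Wc c 0 ((\<lambda>_. undefined)(0 := y)))"
    unfolding V_def atMost_0 by (subst sum_PiE_insert) (simp_all add: PiE_empty_domain fun_upd_def)
  also have "\<dots> = (\<Sum>j'\<in>UNIV. of_bool (j' = j) * (\<Sum>b\<in>UNIV. pi j' * c 0 j' b))"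
    unfolding sum_pair by (simp add: Wc_def sum_distrib_left)
  also have "\<dots> = pi j * (\<Sum>b\<in>UNIV. c 0 j b)"
    by (subst sum_delta_ob) (simp add: sum_distrib_left)
  finally show ?thesis .
qed

lemma Wc_upd: assumes "h \<in> PiE {..n} (\<lambda>_. UNIV)"
  shows "Wc c (Suc n) (h(Suc n := y)) = Wc c n h * p (fst (h n)) (fst y) * c (Suc n) (fst y) (snd y)"
proof -
  have a: "(\<Prod>t<Suc n. p (fst ((h(Suc n := y)) t)) (fst ((h(Suc n := y)) (Suc t))))
      = (\<Prod>t<n. p (fst (h t)) (fst (h (Suc t)))) * p (fst (h n)) (fst y)"
    by (simp add: prod.lessThan_Suc)
  have b: "(\<Prod>t\<le>Suc n. c t (fst ((h(Suc n := y)) t)) (snd ((h(Suc n := y)) t)))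
      = (\<Prod>t\<le>n. c t (fst (h t)) (snd (h t))) * c (Suc n) (fst y) (snd y)"
    by (simp add: prod.atMost_Suc)
  show ?thesis unfolding Wc_def a b by simp
qed

lemma VS: "V c (Suc n) j = (\<Sum>i\<in>UNIV. V c n i * p i j) * (\<Sum>b\<in>UNIV. c (Suc n) j b)"
proof -
  have "V c (Suc n) j = (\<Sum>h\<in>PiE {..n} (\<lambda>_. UNIV). \<Sum>y\<in>UNIV. of_bool (fst y = j) * (Wc c n h * p (fst (h n)) (fst y) * c (Suc n) (fst y) (snd y)))"
    unfolding V_def atMost_Suc
    by (subst sum_PiE_insert) (auto simp: Wc_upd intro!: sum.cong)
  also have "\<dots> = (\<Sum>h\<in>PiE {..n} (\<lambda>_. UNIV). Wc c n h * p (fst (h n)) j * (\<Sum>b\<in>UNIV. c (Suc n) j b))"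
    unfolding sum_pair
    by (intro sum.cong refl) (simp only: fst_conv snd_conv mult.assoc sum_delta_ob2, simp add: sum_distrib_left)
  also have "\<dots> = (\<Sum>h\<in>PiE {..n} (\<lambda>_. UNIV). \<Sum>i\<in>UNIV. of_bool (fst (h n) = i) * Wc c n h * p i j) * (\<Sum>b\<in>UNIV. c (Suc n) j b)"
    unfolding sum_distrib_right
    by (intro sum.cong refl) (use sum_delta_ob[of "fst (_ n)" "\<lambda>i. Wc c n _ * p i j * (\<Sum>b\<in>UNIV. c (Suc n) j b)"] in \<open>simp add: eq_commute mult.assoc\<close>)
  also have "\<dots> = (\<Sum>i\<in>UNIV. V c n i * p i j) * (\<Sum>b\<in>UNIV. c (Suc n) j b)"
    unfolding V_def sum_distrib_right by (subst sum.swap) simp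
  finally show ?thesis .
qed

lemma V_total: "(\<Sum>h\<in>PiE {..n} (\<lambda>_. UNIV). Wc c n h) = (\<Sum>j\<in>UNIV. V c n j)"
  unfolding V_def by (subst sum.swap) (use sum_delta_ob in \<open>simp add: eq_commute\<close>)

lemma V_nn: assumes "\<And>j. 0 \<le> pi j" "\<And>i j. 0 \<le> p i j" "\<And>t j b. 0 \<le> c t j b"
  shows "0 \<le> V c n j"
  by (induction n arbitrary: j) (simp_all add: V0 VS assms sum_nonneg)

end

definition wt :: "('b \<Rightarrow> real) \<Rightarrow> 'b \<Rightarrow> bool \<Rightarrow> real" where
  "wt phi j b = (if b then phi j else 1 - phi j)"

definition cK :: "('b \<Rightarrow> real) \<Rightarrow> nat set \<Rightarrow> nat \<Rightarrow> 'b \<Rightarrow> bool \<Rightarrow> real" where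
  "cK phi K t j b = wt phi j b * (if t \<in> K \<and> b then 0 else 1)"

lemma sum_cK: "(\<Sum>b\<in>UNIV. cK phi K t j b) = (if t \<in> K then 1 - phi j else 1)"
  by (simp add: UNIV_bool cK_def wt_def)

lemma prod_ind: "finite I \<Longrightarrow> (\<Prod>t\<in>I. (if t \<in> K \<and> f t then 0 else 1 :: real)) = of_bool (\<forall>t\<in>I. t \<in> K \<longrightarrow> \<not> f t)"
  by (induction I rule: finite_induct) auto

context chain
begin

lemma Wc_cK: assumes "K \<subseteq> {..n}"
  shows "Wc (cK phi K) n h = Wc (\<lambda>t. wt phi) n h * of_bool (\<forall>t\<in>K. \<not> snd (h t))"
proof -
  have "(\<Prod>t\<le>n. cK phi K t (fst (h t)) (snd (h t))) = (\<Prod>t\<le>n. wt phi (fst (h t)) (snd (h t))) * (\<Prod>t\<le>n. (if t \<in> K \<and> snd (h t) then 0 else 1 :: real))"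
    unfolding cK_def by (rule prod.distrib)
  also have "(\<Prod>t\<le>n. (if t \<in> K \<and> snd (h t) then 0 else 1 :: real)) = of_bool (\<forall>t\<in>K. \<not> snd (h t))"
    using prod_ind[of "{..n}" K "\<lambda>t. snd (h t)"] assms by auto
  finally show ?thesis unfolding Wc_def by (simp add: mult.assoc)
qed

lemma key_V:
  assumes pi0: "\<And>j. 0 \<le> pi j" and pi1: "(\<Sum>j\<in>UNIV. pi j) \<le> 1"
    and p0: "\<And>i j. 0 \<le> p i j" and p1: "\<And>i. (\<Sum>j\<in>UNIV. p i j) = 1"
    and phi: "\<And>j. 0 \<le> phi j \<and> phi j \<le> 1" and a: "0 \<le> a" and r: "0 \<le> \<rho>"
    and cond: "\<And>i. a * (\<Sum>j\<in>UNIV. p i j * (1 - phi j)) \<le> \<rho>"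
    and K0: "0 \<notin> K"
  shows "a ^ card (K \<inter> {..n}) * (\<Sum>j\<in>UNIV. V (cK phi K) n j) \<le> \<rho> ^ card (K \<inter> {..n})"
proof (induction n)
  case 0
  have "K \<inter> {..0} = {}" using K0 by auto
  then show ?case using pi1 K0 by (simp add: V0 sum_cK)
next
  case (Suc n)
  have c0: "0 \<le> cK phi K t j b" for t j b using phi[of j] by (simp add: cK_def wt_def)
  have Vn: "0 \<le> V (cK phi K) n i" for i by (rule V_nn[OF pi0 p0 c0])
  let ?c = "card (K \<inter> {..n})"
  show ?case
  proof (cases "Suc n \<in> K")
    case True
    have cs: "card (K \<inter> {..Suc n}) = Suc ?c"
    proof -
      have "K \<inter> {..Suc n} = insert (Suc n) (K \<inter> {..n})" using True by (auto simp: atMost_Suc)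
      then show ?thesis by simp
    qed
    have "(\<Sum>j\<in>UNIV. V (cK phi K) (Suc n) j) = (\<Sum>i\<in>UNIV. V (cK phi K) n i * (\<Sum>j\<in>UNIV. p i j * (1 - phi j)))"
      using True by (simp add: VS sum_cK sum_distrib_left sum_distrib_right mult.assoc) (rule sum.swap)
    then have "a ^ card (K \<inter> {..Suc n}) * (\<Sum>j\<in>UNIV. V (cK phi K) (Suc n) j)
        = a ^ ?c * (\<Sum>i\<in>UNIV. V (cK phi K) n i * (a * (\<Sum>j\<in>UNIV. p i j * (1 - phi j))))"
      unfolding cs by (simp add: sum_distrib_left algebra_simps)
    also have "\<dots> \<le> a ^ ?c * (\<Sum>i\<in>UNIV. V (cK phi K) n i * \<rho>)"
      using a Vn cond by (intro mult_left_mono sum_mono mult_left_mono) auto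
    also have "\<dots> = \<rho> * (a ^ ?c * (\<Sum>i\<in>UNIV. V (cK phi K) n i))"
      by (simp add: sum_distrib_left sum_distrib_right algebra_simps)
    also have "\<dots> \<le> \<rho> * \<rho> ^ ?c" using Suc r by (intro mult_left_mono) auto
    finally show ?thesis unfolding cs by simp
  next
    case False
    have cs: "card (K \<inter> {..Suc n}) = ?c"
    proof -
      have "K \<inter> {..Suc n} = K \<inter> {..n}" using False by (auto simp: atMost_Suc)
      then show ?thesis by simp
    qed
    have "(\<Sum>j\<in>UNIV. V (cK phi K) (Suc n) j) = (\<Sum>i\<in>UNIV. V (cK phi K) n i * (\<Sum>j\<in>UNIV. p i j))"
      using False by (simp add: VS sum_cK sum_distrib_left sum_distrib_right) (rule sum.swap)
    then show ?thesis using Suc unfolding cs by (simp add: p1)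
  qed
qed

lemma key:
  assumes pi0: "\<And>j. 0 \<le> pi j" and pi1: "(\<Sum>j\<in>UNIV. pi j) \<le> 1"
    and p0: "\<And>i j. 0 \<le> p i j" and p1: "\<And>i. (\<Sum>j\<in>UNIV. p i j) = 1"
    and phi: "\<And>j. 0 \<le> phi j \<and> phi j \<le> 1" and a: "0 \<le> a" and r: "0 \<le> \<rho>"
    and cond: "\<And>i. a * (\<Sum>j\<in>UNIV. p i j * (1 - phi j)) \<le> \<rho>"
    and K0: "0 \<notin> K" and Kn: "K \<subseteq> {..n}"
  shows "a ^ card K * (\<Sum>h\<in>PiE {..n} (\<lambda>_. UNIV). Wc (\<lambda>t. wt phi) n h * of_bool (\<forall>t\<in>K. \<not> snd (h t))) \<le> \<rho> ^ card K"
proof -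
  have "K \<inter> {..n} = K" using Kn by auto
  then show ?thesis
    using key_V[OF assms(1-9), of n] V_total[of "cK phi K" n] Wc_cK[OF Kn] by simp
qed

end

lemma Ppred_cong: "(\<And>t. t < k \<Longrightarrow> g t = g' t) \<Longrightarrow> Ppred A C Q R P0 g k = Ppred A C Q R P0 g' k"
  by (induction k) (simp_all add: Let_def)

locale prb =
  fixes M :: "'w measure" and Xi :: "nat \<Rightarrow> 'w \<Rightarrow> 'b::finite" and gam :: "nat \<Rightarrow> 'w \<Rightarrow> bool"
  assumes M_prob: "prob_space M"
    and Xi_meas: "\<And>k. Xi k \<in> measurable M (count_space UNIV)"
    and gam_meas: "\<And>k. gam k \<in> measurable M (count_space UNIV)"
begin

definition B :: "nat \<Rightarrow> (nat \<Rightarrow> 'b \<times> bool) \<Rightarrow> 'w set" where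
  "B n h = {\<omega> \<in> space M. \<forall>t\<le>n. Xi t \<omega> = fst (h t) \<and> gam t \<omega> = snd (h t)}"

lemma B_sets: "B n h \<in> sets M"
proof -
  have x: "{\<omega> \<in> space M. Xi t \<omega> = j} \<in> sets M" for t j
  proof -
    have "{\<omega> \<in> space M. Xi t \<omega> = j} = Xi t -` {j} \<inter> space M" by auto
    then show ?thesis using measurable_sets[OF Xi_meas, of "{j}" t] by simp
  qed
  have g: "{\<omega> \<in> space M. gam t \<omega> = j} \<in> sets M" for t j
  proof -
    have "{\<omega> \<in> space M. gam t \<omega> = j} = gam t -` {j} \<inter> space M" by auto
    then show ?thesis using measurable_sets[OF gam_meas, of "{j}" t] by simp
  qed
  have "B n h = {\<omega> \<in> space M. \<forall>t\<in>{..n}. Xi t \<omega> = fst (h t) \<and> gam t \<omega> = snd (h t)}"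
    unfolding B_def by auto
  also have "\<dots> \<in> sets M"
    by (intro sets.sets_Collect_finite_All sets.sets_Collect_conj x g) auto
  finally show ?thesis .
qed

lemma expect_paths:
  fixes G :: "(nat \<Rightarrow> 'b \<times> bool) \<Rightarrow> real"
  shows "integral\<^sup>L M (\<lambda>\<omega>. G (restrict (\<lambda>t. (Xi t \<omega>, gam t \<omega>)) {..n}))
    = (\<Sum>h\<in>PiE {..n} (\<lambda>_. UNIV). G h * measure M (B n h))"
proof -
  interpret prob_space M by (rule M_prob)
  have pt: "G (restrict (\<lambda>t. (Xi t \<omega>, gam t \<omega>)) {..n}) = (\<Sum>h\<in>PiE {..n} (\<lambda>_. UNIV). G h * indicator (B n h) \<omega>)"
    if "\<omega> \<in> space M" for \<omega>
  proof -
    let ?z = "restrict (\<lambda>t. (Xi t \<omega>, gam t \<omega>)) {..n}"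
    have ind: "indicator (B n h) \<omega> = (if h = ?z then 1 else (0::real))" if "h \<in> PiE {..n} (\<lambda>_. UNIV)" for h
    proof -
      have "\<omega> \<in> B n h \<longleftrightarrow> h = ?z"
        using that \<open>\<omega> \<in> space M\<close> unfolding B_def
        by (auto simp: PiE_iff extensional_def fun_eq_iff prod_eq_iff)
      then show ?thesis by (simp add: indicator_def)
    qed
    have "(\<Sum>h\<in>PiE {..n} (\<lambda>_. UNIV). G h * indicator (B n h) \<omega>) = (\<Sum>h\<in>PiE {..n} (\<lambda>_. UNIV). if h = ?z then G h else 0)"
      by (intro sum.cong refl) (simp add: ind)
    moreover have mem: "?z \<in> PiE {..n} (\<lambda>_. UNIV)" by (auto simp: PiE_iff)
    moreover have "(\<Sum>h\<in>PiE {..n} (\<lambda>_. UNIV). if h = ?z then G h else 0) = (if ?z \<in> PiE {..n} (\<lambda>_. UNIV) then G ?z else 0)"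
      by (rule sum.delta) (simp add: finite_PiE)
    ultimately show ?thesis by simp
  qed
  have "integral\<^sup>L M (\<lambda>\<omega>. G (restrict (\<lambda>t. (Xi t \<omega>, gam t \<omega>)) {..n}))
     = integral\<^sup>L M (\<lambda>\<omega>. \<Sum>h\<in>PiE {..n} (\<lambda>_. UNIV). G h * indicator (B n h) \<omega>)"
    by (rule Bochner_Integration.integral_cong) (simp_all add: pt)
  also have "\<dots> = (\<Sum>h\<in>PiE {..n} (\<lambda>_. UNIV). integral\<^sup>L M (\<lambda>\<omega>. G h * indicator (B n h) \<omega>))"
    by (rule Bochner_Integration.integral_sum)
       (simp add: integrable_real_indicator[OF B_sets] emeasure_finite less_top[symmetric])
  also have "\<dots> = (\<Sum>h\<in>PiE {..n} (\<lambda>_. UNIV). G h * measure M (B n h))"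
    using B_sets by (simp add: sets.Int_space_eq2)
  finally show ?thesis .
qed

end

theorem corollary1:
  fixes A :: "real^'n^'n" and C1 :: "real^'n^'l"
    and Q :: "nat \<Rightarrow> real^'n^'n" and R1 :: "nat \<Rightarrow> real^'l^'l" and P0 :: "real^'n^'n"
    and M :: "'w measure"
    and Xi :: "nat \<Rightarrow> 'w \<Rightarrow> 'b::finite" and gam :: "nat \<Rightarrow> 'w \<Rightarrow> bool"
    and p :: "'b \<Rightarrow> 'b \<Rightarrow> real" and phi :: "'b \<Rightarrow> real"
  assumes P0_cov: "sym_psd P0"
    and Q_cov: "\<And>k. sym_psd (Q k)" and Q_bdd: "\<exists>q. \<forall>k. spec_norm (Q k) \<le> q"
    and R_cov: "\<And>k. sym_pd (R1 k)" and R_bdd: "\<exists>r. \<forall>k. spec_norm (R1 k) \<le> r"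
    and C1_rank: "rank C1 = CARD('n)"
    and M_prob: "prob_space M"
    and Xi_meas: "\<And>k. Xi k \<in> measurable M (count_space UNIV)"
    and gam_meas: "\<And>k. gam k \<in> measurable M (count_space UNIV)"
    and p_nonneg: "\<And>i j. 0 \<le> p i j" and p_stoch: "\<And>i. (\<Sum>j\<in>UNIV. p i j) = 1"
    and phi_prob: "\<And>j. 0 \<le> phi j \<and> phi j \<le> 1"
    and joint_law: "\<And>n (s :: nat \<Rightarrow> 'b) (g :: nat \<Rightarrow> bool).
          measure M {\<omega> \<in> space M. \<forall>t\<le>n. Xi t \<omega> = s t \<and> gam t \<omega> = g t}
          = measure M {\<omega> \<in> space M. Xi 0 \<omega> = s 0}
            * (\<Prod>t<n. p (s t) (s (Suc t)))
            * (\<Prod>t\<le>n. if g t then phi (s t) else 1 - phi (s t))"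
    and cond: "\<exists>\<rho>. 0 \<le> \<rho> \<and> \<rho> < 1 \<and>
          (\<forall>i. (spec_norm A)^2 * (\<Sum>j\<in>UNIV. p i j * (1 - phi j)) \<le> \<rho>)"
  shows "\<exists>\<alpha> \<beta> \<rho>'. 0 \<le> \<rho>' \<and> \<rho>' < 1 \<and>
          (\<forall>k. integral\<^sup>L M (\<lambda>\<omega>. trace (Ppred A C1 Q R1 P0 (\<lambda>t. gam t \<omega>) k))
                 \<le> \<alpha> * \<rho>'^k + \<beta>)"
proof -
  obtain q where q: "\<And>k. spec_norm (Q k) \<le> q" using Q_bdd by blast
  obtain r where r: "\<And>k. spec_norm (R1 k) \<le> r" using R_bdd by blast
  obtain \<rho>0 where r0: "0 \<le> \<rho>0" "\<rho>0 < 1" and c0: "\<And>i. (spec_norm A)^2 * (\<Sum>j\<in>UNIV. p i j * (1 - phi j)) \<le> \<rho>0"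
    using cond by blast
  define \<rho> where "\<rho> = max \<rho>0 (1/2)"
  have rh: "1/2 \<le> \<rho>" "\<rho> < 1" "0 \<le> \<rho>" using r0 unfolding \<rho>_def by auto
  have cr: "\<And>i. (spec_norm A)^2 * (\<Sum>j\<in>UNIV. p i j * (1 - phi j)) \<le> \<rho>"
    using c0 unfolding \<rho>_def by (meson max.cobounded1 order_trans)
  have "inj ((*v) C1)" using C1_rank full_rank_injective by blast
  then obtain L where L: "L ** C1 = mat 1" using matrix_left_invertible_injective by blast
  interpret sp A C1 Q R1 P0 L q r
    using P0_cov Q_cov R_cov L q r by unfold_locales auto
  interpret prb M Xi gam unfolding prb_def using M_prob Xi_meas gam_meas by blast
  interpret prob_space M by (rule M_prob)
  define pi where "pi j = measure M {\<omega> \<in> space M. Xi 0 \<omega> = j}" for j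
  interpret ch: chain pi p .
  have BW: "measure M (B n h) = ch.Wc (\<lambda>t. wt phi) n h" for n h
    unfolding B_def ch.Wc_def pi_def wt_def using joint_law[of n "\<lambda>t. fst (h t)" "\<lambda>t. snd (h t)"] by simp
  have W0: "0 \<le> ch.Wc (\<lambda>t. wt phi) n h" for n h using BW[of n h] by (metis measure_nonneg)
  have pi0: "0 \<le> pi j" for j unfolding pi_def by simp
  have pi1: "(\<Sum>j\<in>UNIV. pi j) \<le> 1"
  proof -
    have "1 = integral\<^sup>L M (\<lambda>\<omega>. (\<lambda>h. 1::real) (restrict (\<lambda>t. (Xi t \<omega>, gam t \<omega>)) {..0}))"
      by (simp add: prob_space)
    also have "\<dots> = (\<Sum>h\<in>PiE {..0} (\<lambda>_. UNIV). ch.Wc (\<lambda>t. wt phi) 0 h)"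
      by (subst expect_paths[where G="\<lambda>h. 1" and n=0]) (simp add: BW)
    also have "\<dots> = (\<Sum>j\<in>UNIV. pi j)"
      by (subst ch.V_total) (simp add: ch.V0 UNIV_bool wt_def)
    finally show ?thesis by simp
  qed
  have aa: "a * (\<Sum>j\<in>UNIV. p i j * (1 - phi j)) \<le> \<rho>" for i using cr unfolding a_def .
  note KEY = ch.key[OF pi0 pi1 p_nonneg p_stoch phi_prob a_nn rh(3) aa]
  let ?W = "ch.Wc (\<lambda>t. wt phi)"
  let ?n = "real CARD('n)"
  let ?b0 = "spec_norm P0"
  have Dn: "0 \<le> D" using D_ge qc_nn by linarith
  have "integral\<^sup>L M (\<lambda>\<omega>. trace (Ppred A C1 Q R1 P0 (\<lambda>t. gam t \<omega>) k)) \<le> ?n * D / (1 - \<rho>) + ?n * ?b0 * (1 + 2 * a) * \<rho> ^ k" for k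
  proof -
    define G where "G h = trace (Ppred A C1 Q R1 P0 (\<lambda>t. snd (h t)) k)" for h :: "nat \<Rightarrow> 'b \<times> bool"
    define I :: "nat \<Rightarrow> (nat \<Rightarrow> 'b \<times> bool) \<Rightarrow> real" where "I m h = of_bool (fl (\<lambda>t. snd (h t)) (k - m) k)" for m and h :: "nat \<Rightarrow> 'b \<times> bool"
    define I0 :: "(nat \<Rightarrow> 'b \<times> bool) \<Rightarrow> real" where "I0 h = of_bool (fl (\<lambda>t. snd (h t)) 0 k)" for h :: "nat \<Rightarrow> 'b \<times> bool"
    have pw: "trace (Ppred A C1 Q R1 P0 (\<lambda>t. gam t \<omega>) k) = G (restrict (\<lambda>t. (Xi t \<omega>, gam t \<omega>)) {..k})" for \<omega>
      unfolding G_def by (intro arg_cong[where f=trace] Ppred_cong) simp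
    have "integral\<^sup>L M (\<lambda>\<omega>. trace (Ppred A C1 Q R1 P0 (\<lambda>t. gam t \<omega>) k)) = (\<Sum>h\<in>PiE {..k} (\<lambda>_. UNIV). G h * ?W k h)"
      unfolding pw by (subst expect_paths) (simp add: BW)
    also have "\<dots> \<le> (\<Sum>h\<in>PiE {..k} (\<lambda>_. UNIV). (?n * D * (\<Sum>m<k. a^m * I m h) + ?n * ?b0 * a^k * I0 h) * ?W k h)"
    proof (intro sum_mono mult_right_mono W0)
      fix h show "G h \<le> ?n * D * (\<Sum>m<k. a^m * I m h) + ?n * ?b0 * a^k * I0 h"
        unfolding G_def I_def I0_def using trace_bound[of "\<lambda>t. snd (h t)" k] by (simp add: algebra_simps)
    qed
    also have "\<dots> = ?n * D * (\<Sum>m<k. a^m * (\<Sum>h\<in>PiE {..k} (\<lambda>_. UNIV). ?W k h * I m h))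
        + ?n * ?b0 * (a^k * (\<Sum>h\<in>PiE {..k} (\<lambda>_. UNIV). ?W k h * I0 h))"
    proof -
      have e1: "(\<Sum>h\<in>PiE {..k} (\<lambda>_. UNIV). (?n * D * (\<Sum>m<k. a^m * I m h)) * ?W k h)
          = ?n * D * (\<Sum>m<k. a^m * (\<Sum>h\<in>PiE {..k} (\<lambda>_. UNIV). ?W k h * I m h))"
      proof -
        have "(\<Sum>h\<in>PiE {..k} (\<lambda>_. UNIV). (?n * D * (\<Sum>m<k. a^m * I m h)) * ?W k h)
            = (\<Sum>h\<in>PiE {..k} (\<lambda>_. UNIV). \<Sum>m<k. ?n * D * (a^m * (?W k h * I m h)))"
          by (intro sum.cong refl) (simp add: sum_distrib_left sum_distrib_right mult_ac)
        also have "\<dots> = (\<Sum>m<k. \<Sum>h\<in>PiE {..k} (\<lambda>_. UNIV). ?n * D * (a^m * (?W k h * I m h)))"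
          by (rule sum.swap)
        also have "\<dots> = ?n * D * (\<Sum>m<k. a^m * (\<Sum>h\<in>PiE {..k} (\<lambda>_. UNIV). ?W k h * I m h))"
          by (simp only: sum_distrib_left)
        finally show ?thesis .
      qed
      have e2: "(\<Sum>h\<in>PiE {..k} (\<lambda>_. UNIV). (?n * ?b0 * a^k * I0 h) * ?W k h)
          = ?n * ?b0 * (a^k * (\<Sum>h\<in>PiE {..k} (\<lambda>_. UNIV). ?W k h * I0 h))"
        by (simp only: sum_distrib_left) (intro sum.cong refl, simp only: mult_ac)
      show ?thesis unfolding distrib_right sum.distrib e1 e2 ..
    qed
    also have "\<dots> \<le> ?n * D * (1 / (1 - \<rho>)) + ?n * ?b0 * ((1 + 2 * a) * \<rho> ^ k)"
    proof (intro add_mono mult_left_mono)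
      have "(\<Sum>m<k. a^m * (\<Sum>h\<in>PiE {..k} (\<lambda>_. UNIV). ?W k h * I m h)) \<le> (\<Sum>m<k. \<rho>^m)"
      proof (intro sum_mono)
        fix m assume "m \<in> {..<k}"
        then have mk: "m < k" by simp
        have "I m h = of_bool (\<forall>t\<in>{k-m..<k}. \<not> snd (h t))" for h
          unfolding I_def fl_def by auto
        moreover have "card {k-m..<k} = m" using mk by simp
        moreover have "0 \<notin> {k-m..<k}" "{k-m..<k} \<subseteq> {..k}" using mk by auto
        ultimately show "a^m * (\<Sum>h\<in>PiE {..k} (\<lambda>_. UNIV). ?W k h * I m h) \<le> \<rho>^m"
          using KEY[of "{k-m..<k}" k] by simp
      qed
      also have "\<dots> \<le> 1 / (1 - \<rho>)"
        using rh by (simp add: sum_gp_strict field_simps)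
      finally show "(\<Sum>m<k. a^m * (\<Sum>h\<in>PiE {..k} (\<lambda>_. UNIV). ?W k h * I m h)) \<le> 1 / (1 - \<rho>)" .
      define T where "T = (\<Sum>h\<in>PiE {..k} (\<lambda>_. UNIV). ?W k h * of_bool (\<forall>t\<in>{1..<k}. \<not> snd (h t)))"
      have T: "a ^ (k - 1) * T \<le> \<rho> ^ (k - 1)"
        using KEY[of "{1..<k}" k] unfolding T_def by (force simp: subset_eq)
      have "(\<Sum>h\<in>PiE {..k} (\<lambda>_. UNIV). ?W k h * I0 h) \<le> T"
        unfolding T_def I0_def fl_def by (intro sum_mono mult_left_mono W0) auto
      then have "a^k * (\<Sum>h\<in>PiE {..k} (\<lambda>_. UNIV). ?W k h * I0 h) \<le> a^k * T"
        using a_nn by (intro mult_left_mono) auto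
      also have "\<dots> \<le> (1 + 2 * a) * \<rho> ^ k"
      proof (cases k)
        case 0 then show ?thesis using T a_nn by simp
      next
        case (Suc k')
        have "a^k * T = a * (a^k' * T)" using Suc by simp
        also have "\<dots> \<le> a * \<rho>^k'" using T Suc a_nn by (intro mult_left_mono) auto
        also have "\<dots> \<le> a * (2 * \<rho>^k)"
        proof (intro mult_left_mono a_nn)
          have "1 * \<rho>^k' \<le> (2 * \<rho>) * \<rho>^k'" using rh by (intro mult_right_mono) simp_all
          then show "\<rho>^k' \<le> 2 * \<rho>^k" using Suc by simp
        qed
        also have "\<dots> \<le> (1 + 2 * a) * \<rho> ^ k" using rh a_nn by (simp add: algebra_simps)
        finally show ?thesis .
      qed
      finally show "a^k * (\<Sum>h\<in>PiE {..k} (\<lambda>_. UNIV). ?W k h * I0 h) \<le> (1 + 2 * a) * \<rho> ^ k" .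
    qed (use Dn spec_norm_nonneg[of P0] in auto)
    finally show ?thesis by simp
  qed
  then have "\<forall>k. integral\<^sup>L M (\<lambda>\<omega>. trace (Ppred A C1 Q R1 P0 (\<lambda>t. gam t \<omega>) k))
                 \<le> (?n * ?b0 * (1 + 2 * a)) * \<rho>^k + ?n * D / (1 - \<rho>)"
    by (simp add: add.commute)
  then show ?thesis using rh(2,3) by blast
qed

end
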